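(* Under the full-support assumption, for any $\eta>0$ and any OMWU initialization $\hat{\bm\pi}^{(1)}$ with positive entries, $p(\hat{\bm\pi}^{(1)})=p(\hat{\bm\pi}^{(2)})=\cdots=p(\hat{\bm\pi}^{(t)})$ for all $t\ge1$.
   Context: $\mathbb{A}$ is a finite set, $\Delta(\mathbb{A})$ the probability simplex, $\bm P\in\mathbb{R}^{\mathbb{A}\times\mathbb{A}}$ skew-symmetric. $\mathbb{M}$ is the set of Nash equilibria: ${\bm\pi}\in\Delta(\mathbb{A})$ with $\max_a(\bm P{\bm\pi})_a\le 0$. Full-support assumption: for every $a$ there exists ${\bm\pi}\in\mathbb{M}$ with $\pi_a>0$. For ${\bm\pi}$ with positive entries, $p({\bm\pi})=\arg\min_{{\bm\pi}'\in\mathbb{M}}D_{\mathrm{KL}}({\bm\pi}'\|{\bm\pi})$. OMWU: ${\bm\pi}^{(0)}=\hat{\bm\pi}^{(1)}$, and for $t\ge1$, $\pi^{(t)}_a\propto\hat\pi^{(t)}_a e^{\eta(\bm P{\bm\pi}^{(t-1)})_a}$ and $\hat\pi^{(t+1)}_a\propto\hat\pi^{(t)}_a e^{\eta(\bm P{\bm\pi}^{(t)})_a}$ (each normalized to sum to 1). *)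

theory Defs
  imports Complex_Main
begin

definition mat_vec :: "('a::finite \<Rightarrow> 'a \<Rightarrow> real) \<Rightarrow> ('a \<Rightarrow> real) \<Rightarrow> 'a \<Rightarrow> real" where
  "mat_vec P v a = (\<Sum>b\<in>UNIV. P a b * v b)"

definition skew_symmetric :: "('a \<Rightarrow> 'a \<Rightarrow> real) \<Rightarrow> bool" where
  "skew_symmetric P \<longleftrightarrow> (\<forall>a b. P a b = - P b a)"

definition simplex :: "('a::finite \<Rightarrow> real) set" where
  "simplex = {v. (\<forall>a. 0 \<le> v a) \<and> (\<Sum>a\<in>UNIV. v a) = 1}"

definition nash_set :: "('a::finite \<Rightarrow> 'a \<Rightarrow> real) \<Rightarrow> ('a \<Rightarrow> real) set" where
  "nash_set P = {v \<in> simplex. \<forall>a. mat_vec P v a \<le> 0}"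

definition full_support :: "('a::finite \<Rightarrow> 'a \<Rightarrow> real) \<Rightarrow> bool" where
  "full_support P \<longleftrightarrow> (\<forall>a. \<exists>v\<in>nash_set P. v a > 0)"

text \<open>KL divergence D(q || r) = sum_a q_a ln(q_a / r_a), with 0 ln 0 = 0
  (automatic, since 0 * x = 0).\<close>
definition KL :: "('a::finite \<Rightarrow> real) \<Rightarrow> ('a \<Rightarrow> real) \<Rightarrow> real" where
  "KL q r = (\<Sum>a\<in>UNIV. q a * ln (q a / r a))"

definition kl_proj :: "('a::finite \<Rightarrow> 'a \<Rightarrow> real) \<Rightarrow> ('a \<Rightarrow> real) \<Rightarrow> ('a \<Rightarrow> real)" where
  "kl_proj P r = (THE q. q \<in> nash_set P \<and> (\<forall>q'\<in>nash_set P. KL q r \<le> KL q' r))"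

definition normalize :: "('a::finite \<Rightarrow> real) \<Rightarrow> 'a \<Rightarrow> real" where
  "normalize v a = v a / (\<Sum>b\<in>UNIV. v b)"

text \<open>OMWU state: omwu_state eta P init n = (pi^(n), pihat^(n+1)).\<close>
fun omwu_state :: "real \<Rightarrow> ('a::finite \<Rightarrow> 'a \<Rightarrow> real) \<Rightarrow> ('a \<Rightarrow> real) \<Rightarrow> nat
    \<Rightarrow> ('a \<Rightarrow> real) \<times> ('a \<Rightarrow> real)" where
  "omwu_state eta P init 0 = (init, init)"
| "omwu_state eta P init (Suc n) =
     (let pi_prev = fst (omwu_state eta P init n);
          hat = snd (omwu_state eta P init n);
          pi_new = normalize (\<lambda>a. hat a * exp (eta * mat_vec P pi_prev a));
          hat_new = normalize (\<lambda>a. hat a * exp (eta * mat_vec P pi_new a))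
      in (pi_new, hat_new))"

text \<open>pihat^(t) for t >= 1.\<close>
definition omwu_hat :: "real \<Rightarrow> ('a::finite \<Rightarrow> 'a \<Rightarrow> real) \<Rightarrow> ('a \<Rightarrow> real) \<Rightarrow> nat \<Rightarrow> 'a \<Rightarrow> real" where
  "omwu_hat eta P init t = snd (omwu_state eta P init (t - 1))"

end

theory Submission
  imports Defs
begin

lemma skew_bilin:
  fixes P :: "'a::finite \<Rightarrow> 'a \<Rightarrow> real"
  assumes "skew_symmetric P"
  shows "(\<Sum>a\<in>UNIV. u a * mat_vec P v a) = - (\<Sum>b\<in>UNIV. v b * mat_vec P u b)"
proof -
  have "(\<Sum>a\<in>UNIV. u a * mat_vec P v a) = (\<Sum>a\<in>UNIV. \<Sum>b\<in>UNIV. u a * P a b * v b)"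
    by (simp add: mat_vec_def sum_distrib_left mult.assoc)
  also have "\<dots> = (\<Sum>b\<in>UNIV. \<Sum>a\<in>UNIV. u a * P a b * v b)" by (rule sum.swap)
  also have "\<dots> = (\<Sum>b\<in>UNIV. \<Sum>a\<in>UNIV. - (v b * P b a * u a))"
    using assms unfolding skew_symmetric_def by (intro sum.cong refl) (metis mult.commute mult_minus_left mult.assoc)
  also have "\<dots> = - (\<Sum>b\<in>UNIV. v b * mat_vec P u b)"
    by (simp add: mat_vec_def sum_distrib_left mult.assoc sum_negf)
  finally show ?thesis .
qed

lemma sum_nonpos_zero:
  fixes f :: "'a::finite \<Rightarrow> real"
  assumes "\<And>a. f a \<le> 0" "(\<Sum>a\<in>UNIV. f a) = 0"
  shows "f a = 0"
proof -
  have "(\<Sum>a\<in>UNIV. - f a) = 0" using assms(2) by (simp add: sum_negf)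
  then have "\<forall>a\<in>UNIV. - f a = 0"
    using assms(1) by (subst sum_nonneg_eq_0_iff[symmetric]) auto
  then show ?thesis by simp
qed

lemma exists_pos_nash:
  fixes P :: "'a::finite \<Rightarrow> 'a \<Rightarrow> real"
  assumes "full_support P"
  shows "\<exists>w\<in>nash_set P. \<forall>a. w a > 0"
proof -
  obtain V where V: "\<And>a. V a \<in> nash_set P \<and> V a a > 0"
    using assms unfolding full_support_def by metis
  define n where "n = real (card (UNIV::'a set))"
  have npos: "n > 0" unfolding n_def by (simp add: finite_UNIV_card_ge_0)
  define w where "w b = (\<Sum>a\<in>UNIV. V a b) / n" for b
  have Vnn: "V a b \<ge> 0" for a b using V[of a] by (simp add: nash_set_def simplex_def)
  have Vs: "(\<Sum>b\<in>UNIV. V a b) = 1" for a using V[of a] by (simp add: nash_set_def simplex_def)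
  have Vm: "mat_vec P (V a) b \<le> 0" for a b using V[of a] by (simp add: nash_set_def)
  have pos: "w b > 0" for b
  proof -
    have "(\<Sum>a\<in>UNIV. V a b) \<ge> V b b"
      by (rule member_le_sum) (auto simp: Vnn)
    then show ?thesis using V[of b] npos unfolding w_def by simp
  qed
  have sum1: "(\<Sum>b\<in>UNIV. w b) = 1"
  proof -
    have "(\<Sum>b\<in>UNIV. w b) = (\<Sum>a\<in>UNIV. \<Sum>b\<in>UNIV. V a b) / n"
      unfolding w_def sum_divide_distrib[symmetric] by (subst sum.swap) (rule refl)
    also have "\<dots> = 1" using npos by (simp add: Vs n_def)
    finally show ?thesis .
  qed
  have mv: "mat_vec P w b \<le> 0" for b
  proof -
    have "mat_vec P w b = (\<Sum>a\<in>UNIV. mat_vec P (V a) b) / n"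
    proof -
      have "mat_vec P w b = (\<Sum>c\<in>UNIV. \<Sum>a\<in>UNIV. P b c * V a c) / n"
        unfolding mat_vec_def w_def by (simp add: sum_divide_distrib sum_distrib_left)
      also have "\<dots> = (\<Sum>a\<in>UNIV. \<Sum>c\<in>UNIV. P b c * V a c) / n"
        by (subst sum.swap) (rule refl)
      finally show ?thesis unfolding mat_vec_def .
    qed
    also have "\<dots> \<le> 0" using npos by (simp add: divide_nonpos_pos sum_nonpos Vm)
    finally show ?thesis .
  qed
  show ?thesis using pos sum1 mv
    by (intro bexI[of _ w]) (auto simp: nash_set_def simplex_def less_imp_le)
qed

lemma nash_zero:
  fixes P :: "'a::finite \<Rightarrow> 'a \<Rightarrow> real"
  assumes sk: "skew_symmetric P" and fs: "full_support P" and q: "q \<in> nash_set P"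
  shows "mat_vec P q a = 0"
proof -
  obtain w where w: "w \<in> nash_set P" "\<And>a. w a > 0" using exists_pos_nash[OF fs] by blast
  have wm: "mat_vec P w b \<le> 0" for b using w(1) by (simp add: nash_set_def)
  have qm: "mat_vec P q b \<le> 0" for b using q by (simp add: nash_set_def)
  have qnn: "q b \<ge> 0" for b using q by (simp add: nash_set_def simplex_def)
  have "(\<Sum>a\<in>UNIV. w a * mat_vec P w a) = 0"
    using skew_bilin[OF sk, of w w] by linarith
  then have w0: "w a * mat_vec P w a = 0" for a
    by (rule sum_nonpos_zero[rotated]) (simp add: mult_nonneg_nonpos less_imp_le w(2) wm)
  have wz: "mat_vec P w a = 0" for a using w0[of a] w(2)[of a] by simp
  have "(\<Sum>a\<in>UNIV. w a * mat_vec P q a) = 0"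
    using skew_bilin[OF sk, of w q] by (simp add: wz)
  then have "w a * mat_vec P q a = 0"
    by (rule sum_nonpos_zero[rotated]) (simp add: mult_nonneg_nonpos less_imp_le w(2) qm)
  then show ?thesis using w(2)[of a] by simp
qed

lemma kl_proj_shift:
  assumes "\<And>q. q \<in> nash_set P \<Longrightarrow> KL q r' = KL q r + c"
  shows "kl_proj P r' = kl_proj P r"
  unfolding kl_proj_def
  by (rule arg_cong[where f=The], rule ext) (use assms in force)

lemma kl_step:
  fixes P :: "'a::finite \<Rightarrow> 'a \<Rightarrow> real"
  assumes sk: "skew_symmetric P" and fs: "full_support P"
    and r: "\<And>a. r a > 0"
  shows "kl_proj P (normalize (\<lambda>a. r a * exp (eta * mat_vec P v a))) = kl_proj P r"
proof (rule kl_proj_shift)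
  fix q assume q: "q \<in> nash_set P"
  define Z where "Z = (\<Sum>b\<in>UNIV. r b * exp (eta * mat_vec P v b))"
  have Zpos: "Z > 0" unfolding Z_def
    by (rule sum_pos) (auto simp: r)
  have qnn: "q b \<ge> 0" for b using q by (simp add: nash_set_def simplex_def)
  have qs: "(\<Sum>b\<in>UNIV. q b) = 1" using q by (simp add: nash_set_def simplex_def)
  have orth: "(\<Sum>a\<in>UNIV. q a * mat_vec P v a) = 0"
    using skew_bilin[OF sk, of q v] nash_zero[OF sk fs q] by simp
  have tm: "q a * ln (q a / normalize (\<lambda>a. r a * exp (eta * mat_vec P v a)) a)
      = q a * ln (q a / r a) + q a * ln Z - eta * (q a * mat_vec P v a)" for a
  proof (cases "q a = 0")
    case True then show ?thesis by simp
  next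
    case False
    then have qp: "q a > 0" using qnn[of a] by simp
    have "q a / normalize (\<lambda>a. r a * exp (eta * mat_vec P v a)) a
        = (q a / r a) * Z / exp (eta * mat_vec P v a)"
      unfolding normalize_def Z_def[symmetric] using r[of a] Zpos by (simp add: field_simps)
    moreover have "ln ((q a / r a) * Z / exp (eta * mat_vec P v a))
        = ln (q a / r a) + ln Z - eta * mat_vec P v a"
      using qp r[of a] Zpos by (simp add: ln_div ln_mult)
    ultimately have "q a * ln (q a / normalize (\<lambda>a. r a * exp (eta * mat_vec P v a)) a)
       = q a * (ln (q a / r a) + ln Z - eta * mat_vec P v a)" by simp
    then show ?thesis by (simp add: algebra_simps)
  qed
  show "KL q (normalize (\<lambda>a. r a * exp (eta * mat_vec P v a))) = KL q r + ln Z"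
  proof -
    have "KL q (normalize (\<lambda>a. r a * exp (eta * mat_vec P v a)))
       = (\<Sum>a\<in>UNIV. q a * ln (q a / r a)) + (\<Sum>a\<in>UNIV. q a) * ln Z - eta * (\<Sum>a\<in>UNIV. q a * mat_vec P v a)"
      unfolding KL_def tm by (simp only: sum.distrib sum_subtractf sum_distrib_left sum_distrib_right)
    then show ?thesis unfolding KL_def qs orth by simp
  qed
qed

lemma normalize_pos:
  fixes r :: "'a::finite \<Rightarrow> real"
  assumes "\<And>a. r a > 0"
  shows "normalize (\<lambda>a. r a * exp (x a)) b > 0"
proof -
  have "(\<Sum>a\<in>UNIV. r a * exp (x a)) > 0" by (rule sum_pos) (auto simp: assms)
  then show ?thesis unfolding normalize_def using assms[of b] by simp
qed

theorem mainTheorem5: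
  fixes P :: "'a::finite \<Rightarrow> 'a \<Rightarrow> real" and eta :: real and init :: "'a \<Rightarrow> real"
  assumes "skew_symmetric P"
    and "full_support P"
    and "eta > 0"
    and "\<forall>a. init a > 0"
    and "(\<Sum>a\<in>UNIV. init a) = 1"
  shows "\<forall>t\<ge>1. kl_proj P (omwu_hat eta P init t) = kl_proj P (omwu_hat eta P init 1)"
proof -
  have inv: "(\<forall>a. snd (omwu_state eta P init n) a > 0) \<and>
      kl_proj P (snd (omwu_state eta P init n)) = kl_proj P init" for n
  proof (induction n)
    case 0 then show ?case using assms(4) by simp
  next
    case (Suc n)
    let ?h = "snd (omwu_state eta P init n)"
    let ?p = "fst (omwu_state eta P init n)"
    let ?pn = "normalize (\<lambda>a. ?h a * exp (eta * mat_vec P ?p a))"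
    have eq: "snd (omwu_state eta P init (Suc n)) = normalize (\<lambda>a. ?h a * exp (eta * mat_vec P ?pn a))"
      by (simp add: Let_def)
    have hp: "\<And>a. ?h a > 0" using Suc.IH by blast
    show ?case unfolding eq
      using normalize_pos[OF hp, where x="\<lambda>a. eta * mat_vec P ?pn a"]
        kl_step[OF assms(1,2) hp, where eta=eta and v="?pn"] Suc.IH by simp
  qed
  show ?thesis
  proof (intro allI impI)
    fix t :: nat assume "t \<ge> 1"
    then show "kl_proj P (omwu_hat eta P init t) = kl_proj P (omwu_hat eta P init 1)"
      unfolding omwu_hat_def using inv by simp
  qed
qed

end
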